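(* There are universal constants $0<c_1\le c_2$ such that for all positive integers $m$ and all $p,q\in[0,1]$, \[ c_1\min\left(m|p-q|,\frac{\sqrt m\,|p-q|}{\sqrt{p(1-p)}},1\right)\le \ell_1(\mathrm{Bin}(m,p),\mathrm{Bin}(m,q))\le c_2\min\left(m|p-q|,\frac{\sqrt m\,|p-q|}{\sqrt{p(1-p)}},1\right). \]
   Context: $\ell_1(P,Q)=\sum_x|P(x)-Q(x)|$ for distributions on $\{0,1,\dots,m\}$, and $\mathrm{Bin}(m,p)$ is the binomial distribution. When $p(1-p)=0$ the middle term is interpreted as $+\infty$ if $p\neq q$ (and $0$ if $p=q$). *)

theory Defs
  imports "HOL-Probability.Probability"
begin

definition l1_dist :: "nat \<Rightarrow> nat pmf \<Rightarrow> nat pmf \<Rightarrow> real" where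
  "l1_dist m P Q = (\<Sum>x\<in>{0..m}. \<bar>pmf P x - pmf Q x\<bar>)"

definition mid_term :: "nat \<Rightarrow> real \<Rightarrow> real \<Rightarrow> ereal" where
  "mid_term m p q =
     (if p = q then 0
      else if p * (1 - p) = 0 then \<infinity>
      else ereal (sqrt (real m) * \<bar>p - q\<bar> / sqrt (p * (1 - p))))"

definition bin_rate :: "nat \<Rightarrow> real \<Rightarrow> real \<Rightarrow> ereal" where
  "bin_rate m p q = min (ereal (real m * \<bar>p - q\<bar>)) (min (mid_term m p q) 1)"

end

theory Submission
  imports Defs
begin


definition bp :: "nat \<Rightarrow> real \<Rightarrow> nat \<Rightarrow> real" where
  "bp n s k = real (n choose k) * s^k * (1-s)^(n-k)"

lemma bp_nonneg: "0 \<le> s \<Longrightarrow> s \<le> 1 \<Longrightarrow> 0 \<le> bp n s k"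
  unfolding bp_def by simp

lemma bp_sum: "(\<Sum>k\<le>n. bp n s k) = 1"
proof -
  have "(s + (1-s))^n = (\<Sum>k\<le>n. bp n s k)"
    unfolding bp_def by (subst binomial_ring) simp
  then show ?thesis by simp
qed

lemma pmf_bin: "p \<in> {0..1} \<Longrightarrow> pmf (binomial_pmf m p) k = bp m p k"
  unfolding bp_def by simp

lemma shift_sum:
  "(\<Sum>k\<le>Suc n. bp (Suc n) s k * real k * f k) = real (Suc n) * s * (\<Sum>j\<le>n. bp n s j * f (Suc j))"
proof -
  have "(\<Sum>k\<le>Suc n. bp (Suc n) s k * real k * f k) = (\<Sum>j\<le>n. bp (Suc n) s (Suc j) * real (Suc j) * f (Suc j))"
    by (subst sum.atMost_Suc_shift) simp
  also have "\<dots> = (\<Sum>j\<le>n. real (Suc n) * s * (bp n s j * f (Suc j)))"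
  proof (rule sum.cong[OF refl])
    fix j assume "j \<in> {..n}"
    have e: "real (Suc n choose Suc j) * real (Suc j) = real (Suc n) * real (n choose j)"
      using Suc_times_binomial_eq[of n j] by (metis of_nat_mult)
    show "bp (Suc n) s (Suc j) * real (Suc j) * f (Suc j) = real (Suc n) * s * (bp n s j * f (Suc j))"
    proof -
      have "bp (Suc n) s (Suc j) * real (Suc j) * f (Suc j) =
          (real (Suc n choose Suc j) * real (Suc j)) * s * (s^j * (1-s)^(n-j) * f (Suc j))"
        unfolding bp_def by (simp add: ac_simps)
      also have "\<dots> = real (Suc n) * s * (bp n s j * f (Suc j))"
        unfolding e bp_def by (simp add: ac_simps)
      finally show ?thesis .
    qed
  qed
  also have "\<dots> = real (Suc n) * s * (\<Sum>j\<le>n. bp n s j * f (Suc j))"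
    by (simp add: sum_distrib_left)
  finally show ?thesis .
qed

lemma mean_sum: "(\<Sum>k\<le>n. bp n s k * real k) = real n * s"
proof (cases n)
  case 0 then show ?thesis by simp
next
  case (Suc n')
  have "(\<Sum>k\<le>n. bp n s k * real k) = (\<Sum>k\<le>Suc n'. bp (Suc n') s k * real k * 1)"
    using Suc by simp
  also have "\<dots> = real n * s" using shift_sum[of n' s "\<lambda>_. 1"] bp_sum[of n' s] Suc by simp
  finally show ?thesis .
qed

lemma sq_sum: "(\<Sum>k\<le>n. bp n s k * (real k)^2) = real n * s * ((real n - 1) * s + 1)"
proof (cases n)
  case 0 then show ?thesis by simp
next
  case (Suc n')
  have "(\<Sum>k\<le>n. bp n s k * (real k)^2) = (\<Sum>k\<le>Suc n'. bp (Suc n') s k * real k * real k)"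
    using Suc by (simp add: power2_eq_square mult.assoc)
  also have "\<dots> = real (Suc n') * s * (\<Sum>j\<le>n'. bp n' s j * real (Suc j))"
    by (rule shift_sum)
  also have "(\<Sum>j\<le>n'. bp n' s j * real (Suc j)) = (\<Sum>j\<le>n'. bp n' s j * real j) + (\<Sum>j\<le>n'. bp n' s j)"
    by (simp add: sum.distrib algebra_simps)
  also have "\<dots> = real n' * s + 1" using mean_sum bp_sum by simp
  finally show ?thesis using Suc by simp
qed

lemma var_sum: "(\<Sum>k\<le>n. bp n s k * (real k - real n * s)^2) = real n * s * (1 - s)"
proof -
  have "(\<Sum>k\<le>n. bp n s k * (real k - real n * s)^2) =
     (\<Sum>k\<le>n. bp n s k * (real k)^2) - 2 * (real n * s) * (\<Sum>k\<le>n. bp n s k * real k) + (real n * s)^2 * (\<Sum>k\<le>n. bp n s k)"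
    by (simp add: power2_diff algebra_simps sum.distrib sum_subtractf sum_distrib_left)
      (simp add: sum_distrib_left sum_distrib_right ac_simps)
  also have "\<dots> = real n * s * (1 - s)"
    unfolding sq_sum mean_sum bp_sum by (simp add: power2_eq_square algebra_simps)
  finally show ?thesis .
qed

lemma deriv_E:
  "((\<lambda>s. \<Sum>k\<le>Suc n. bp (Suc n) s k * w k) has_real_derivative
     (real (Suc n) * (\<Sum>j\<le>n. bp n s j * (w (Suc j) - w j)))) (at s)"
proof -
  define N where "N = Suc n"
  have d: "((\<lambda>s. bp N s k * w k) has_real_derivative
      (real (N choose k) * real k * s^(k-1) * (1-s)^(N-k) * w k
       - real (N choose k) * real (N-k) * s^k * (1-s)^(N-k-1) * w k)) (at s)" for k
    unfolding bp_def
    by (auto intro!: derivative_eq_intros simp: algebra_simps)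
  have A: "(\<Sum>k\<le>N. real (N choose k) * real k * s^(k-1) * (1-s)^(N-k) * w k)
        = real N * (\<Sum>j\<le>n. bp n s j * w (Suc j))"
  proof -
    have "(\<Sum>k\<le>N. real (N choose k) * real k * s^(k-1) * (1-s)^(N-k) * w k)
       = (\<Sum>j\<le>n. real (N choose Suc j) * real (Suc j) * s^j * (1-s)^(n-j) * w (Suc j))"
      unfolding N_def by (subst sum.atMost_Suc_shift) simp
    also have "\<dots> = (\<Sum>j\<le>n. real N * (bp n s j * w (Suc j)))"
    proof (rule sum.cong[OF refl])
      fix j assume "j \<in> {..n}"
      have e: "real (Suc n choose Suc j) * real (Suc j) = real (Suc n) * real (n choose j)"
        using Suc_times_binomial_eq[of n j] by (metis of_nat_mult)
      show "real (N choose Suc j) * real (Suc j) * s^j * (1-s)^(n-j) * w (Suc j) = real N * (bp n s j * w (Suc j))"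
        unfolding bp_def N_def using e by (simp add: mult.assoc)
    qed
    finally show ?thesis by (simp add: sum_distrib_left)
  qed
  have B: "(\<Sum>k\<le>N. real (N choose k) * real (N-k) * s^k * (1-s)^(N-k-1) * w k)
        = real N * (\<Sum>j\<le>n. bp n s j * w j)"
  proof -
    have "(\<Sum>k\<le>N. real (N choose k) * real (N-k) * s^k * (1-s)^(N-k-1) * w k)
       = (\<Sum>k\<le>n. real (N choose k) * real (N-k) * s^k * (1-s)^(N-k-1) * w k)"
      unfolding N_def by (subst sum.atMost_Suc) simp
    also have "\<dots> = (\<Sum>j\<le>n. real N * (bp n s j * w j))"
    proof (rule sum.cong[OF refl])
      fix j assume j: "j \<in> {..n}"
      have e: "real (N choose j) * real (N - j) = real N * real (n choose j)"
        using binomial_absorb_comp[of N j] unfolding N_def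
        by (metis diff_Suc_1 mult.commute of_nat_mult)
      have e2: "N - j - 1 = n - j" unfolding N_def by simp
      show "real (N choose j) * real (N-j) * s^j * (1-s)^(N-j-1) * w j = real N * (bp n s j * w j)"
        unfolding bp_def e2 using e by (simp add: mult.assoc)
    qed
    finally show ?thesis by (simp add: sum_distrib_left)
  qed
  have "((\<lambda>s. \<Sum>k\<le>N. bp N s k * w k) has_real_derivative
      (\<Sum>k\<le>N. real (N choose k) * real k * s^(k-1) * (1-s)^(N-k) * w k
       - real (N choose k) * real (N-k) * s^k * (1-s)^(N-k-1) * w k)) (at s)"
    by (rule DERIV_sum) (rule d)
  also have "(\<Sum>k\<le>N. real (N choose k) * real k * s^(k-1) * (1-s)^(N-k) * w k
       - real (N choose k) * real (N-k) * s^k * (1-s)^(N-k-1) * w k)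
     = real N * (\<Sum>j\<le>n. bp n s j * (w (Suc j) - w j))"
    unfolding sum_subtractf A B by (simp add: algebra_simps sum_subtractf)
  finally show ?thesis unfolding N_def .
qed



definition Ex :: "nat \<Rightarrow> real \<Rightarrow> (nat \<Rightarrow> real) \<Rightarrow> real" where
  "Ex n s w = (\<Sum>k\<le>n. bp n s k * w k)"
definition Dr :: "nat \<Rightarrow> real \<Rightarrow> (nat \<Rightarrow> real) \<Rightarrow> real" where
  "Dr n s w = real (Suc n) * (\<Sum>j\<le>n. bp n s j * (w (Suc j) - w j))"

lemma deriv_Ex: "((\<lambda>s. Ex (Suc n) s w) has_real_derivative Dr n s w) (at s)"
  unfolding Ex_def Dr_def by (rule deriv_E)

lemma mvt_gen:
  fixes f f' :: "real \<Rightarrow> real"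
  assumes d: "\<And>x. (f has_real_derivative f' x) (at x)"
  shows "\<exists>\<xi>. min a b \<le> \<xi> \<and> \<xi> \<le> max a b \<and> f b - f a = (b - a) * f' \<xi>"
proof (cases a b rule: linorder_cases)
  case less
  then obtain z where "a < z" "z < b" "f b - f a = (b-a) * f' z" using MVT2[of a b f f'] d by blast
  then show ?thesis by (intro exI[of _ z]) auto
next
  case equal then show ?thesis by (intro exI[of _ a]) auto
next
  case greater
  then obtain z where z: "b < z" "z < a" "f a - f b = (a-b) * f' z" using MVT2[of b a f f'] d by blast
  have "f b - f a = (b - a) * f' z" using z(3) by (simp add: algebra_simps)
  then show ?thesis using z by (intro exI[of _ z]) auto
qed

lemma sum_bound:
  assumes "0 \<le> s" "s \<le> 1" "\<And>j. j \<le> n \<Longrightarrow> \<bar>g j\<bar> \<le> B"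
  shows "\<bar>\<Sum>j\<le>n. bp n s j * g j\<bar> \<le> B"
proof -
  have "\<bar>\<Sum>j\<le>n. bp n s j * g j\<bar> \<le> (\<Sum>j\<le>n. \<bar>bp n s j * g j\<bar>)" by (rule sum_abs)
  also have "\<dots> \<le> (\<Sum>j\<le>n. bp n s j * B)"
    by (rule sum_mono) (auto simp: abs_mult bp_nonneg assms intro: mult_left_mono)
  also have "\<dots> = B" by (simp add: sum_distrib_right[symmetric] bp_sum)
  finally show ?thesis .
qed

lemma l1_eq: "p \<in> {0..1} \<Longrightarrow> q \<in> {0..1} \<Longrightarrow>
  l1_dist m (binomial_pmf m p) (binomial_pmf m q) = (\<Sum>k\<le>m. \<bar>bp m p k - bp m q k\<bar>)"
  unfolding l1_dist_def atLeast0AtMost bp_def by simp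

lemma ub_two:
  assumes "p \<in> {0..1}" "q \<in> {0..1}"
  shows "(\<Sum>k\<le>m. \<bar>bp m p k - bp m q k\<bar>) \<le> 2"
proof -
  have nn: "0 \<le> bp m p k" "0 \<le> bp m q k" for k using assms bp_nonneg by auto
  have "(\<Sum>k\<le>m. \<bar>bp m p k - bp m q k\<bar>) \<le> (\<Sum>k\<le>m. bp m p k + bp m q k)"
  proof (rule sum_mono)
    fix k show "\<bar>bp m p k - bp m q k\<bar> \<le> bp m p k + bp m q k" using nn[of k] by linarith
  qed
  also have "\<dots> = 2" by (simp add: sum.distrib bp_sum)
  finally show ?thesis .
qed

lemma ub_lin:
  assumes "p \<in> {0..1}" "q \<in> {0..1}"
  shows "(\<Sum>k\<le>Suc n. \<bar>bp (Suc n) p k - bp (Suc n) q k\<bar>) \<le> 2 * real (Suc n) * \<bar>p - q\<bar>"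
proof -
  define w where "w k = sgn (bp (Suc n) p k - bp (Suc n) q k)" for k
  have L: "(\<Sum>k\<le>Suc n. \<bar>bp (Suc n) p k - bp (Suc n) q k\<bar>) = Ex (Suc n) p w - Ex (Suc n) q w"
    unfolding Ex_def w_def sum_subtractf[symmetric]
    by (intro sum.cong) (auto simp: sgn_if algebra_simps)
  obtain \<xi> where xi: "min q p \<le> \<xi>" "\<xi> \<le> max q p"
     "Ex (Suc n) p w - Ex (Suc n) q w = (p - q) * Dr n \<xi> w"
    using mvt_gen[of "\<lambda>s. Ex (Suc n) s w" "\<lambda>s. Dr n s w" q p] deriv_Ex by blast
  have D: "\<bar>Dr n \<xi> w\<bar> \<le> real (Suc n) * 2"
  proof -
    have "\<bar>\<Sum>j\<le>n. bp n \<xi> j * (w (Suc j) - w j)\<bar> \<le> 2"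
      using xi assms by (intro sum_bound) (auto simp: w_def sgn_if)
    moreover have "\<bar>real (Suc n)\<bar> = real (Suc n)" by simp
    ultimately show ?thesis unfolding Dr_def abs_mult abs_of_nonneg[OF of_nat_0_le_iff] by (intro mult_left_mono) auto
  qed
  have L0: "(\<Sum>k\<le>Suc n. \<bar>bp (Suc n) p k - bp (Suc n) q k\<bar>) \<ge> 0" by (intro sum_nonneg) auto
  have "(\<Sum>k\<le>Suc n. \<bar>bp (Suc n) p k - bp (Suc n) q k\<bar>) = \<bar>(p - q) * Dr n \<xi> w\<bar>"
    using L L0 xi(3) by simp
  also have "\<dots> = \<bar>p - q\<bar> * \<bar>Dr n \<xi> w\<bar>" by (rule abs_mult)
  also have "\<dots> \<le> \<bar>p - q\<bar> * (real (Suc n) * 2)" using D by (intro mult_left_mono) auto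
  also have "\<dots> = 2 * real (Suc n) * \<bar>p - q\<bar>" by (simp only: mult_ac)
  finally show ?thesis .
qed

lemma cs:
  fixes a P :: "'a \<Rightarrow> real"
  assumes "finite A" "\<And>k. k \<in> A \<Longrightarrow> 0 < P k" "sum P A = 1"
  shows "(\<Sum>k\<in>A. \<bar>a k\<bar>)^2 \<le> (\<Sum>k\<in>A. (a k)^2 / P k)"
proof -
  define S where "S = (\<Sum>k\<in>A. (a k)^2 / P k)"
  have key: "2 * (\<Sum>k\<in>A. \<bar>a k\<bar>) \<le> t + S / t" if t: "t > 0" for t
  proof -
    have pt: "2 * \<bar>a k\<bar> \<le> t * P k + (a k)^2 / (t * P k)" if k: "k \<in> A" for k
    proof -
      define y where "y = t * P k"
      have y: "y > 0" using t assms(2)[OF k] unfolding y_def by simp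
      have "0 \<le> (y - \<bar>a k\<bar>)^2 / y" using y by simp
      also have "(y - \<bar>a k\<bar>)^2 / y = y + (a k)^2 / y - 2 * \<bar>a k\<bar>"
        using y by (simp add: field_simps power2_diff power2_abs) (simp add: power2_eq_square)
      finally show ?thesis unfolding y_def by simp
    qed
    have "2 * (\<Sum>k\<in>A. \<bar>a k\<bar>) = (\<Sum>k\<in>A. 2 * \<bar>a k\<bar>)" by (simp add: sum_distrib_left)
    also have "\<dots> \<le> (\<Sum>k\<in>A. t * P k + (a k)^2 / (t * P k))" by (rule sum_mono) (rule pt)
    also have "\<dots> = t * sum P A + S / t"
      unfolding S_def by (simp add: sum.distrib sum_distrib_left sum_divide_distrib field_simps)
    finally show ?thesis using assms(3) by simp
  qed
  have S0: "S \<ge> 0" unfolding S_def using assms(2) by (intro sum_nonneg divide_nonneg_pos) auto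
  show ?thesis
  proof (cases "S = 0")
    case True
    have "\<forall>k\<in>A. (a k)^2 / P k = 0"
      using True assms(1,2) unfolding S_def by (subst sum_nonneg_eq_0_iff[symmetric]) (auto intro: divide_nonneg_pos)
    then have "\<forall>k\<in>A. a k = 0" using assms(2) by fastforce
    then show ?thesis using True S_def by simp
  next
    case False
    then have Sp: "S > 0" using S0 by simp
    have "2 * (\<Sum>k\<in>A. \<bar>a k\<bar>) \<le> sqrt S + S / sqrt S" using key[of "sqrt S"] Sp by simp
    also have "S / sqrt S = sqrt S" using Sp by (simp add: real_div_sqrt)
    finally have "(\<Sum>k\<in>A. \<bar>a k\<bar>) \<le> sqrt S" by simp
    then have "(\<Sum>k\<in>A. \<bar>a k\<bar>)^2 \<le> (sqrt S)^2" by (intro power_mono) (auto intro: sum_nonneg)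
    then show ?thesis using S0 unfolding S_def by simp
  qed
qed

lemma chi_sum:
  assumes p: "0 < p" "p < 1"
  shows "(\<Sum>k\<le>m. (bp m q k)^2 / bp m p k) = (q^2/p + (1-q)^2/(1-p))^m"
proof -
  have "(q^2/p + (1-q)^2/(1-p))^m = (\<Sum>k\<le>m. real (m choose k) * (q^2/p)^k * ((1-q)^2/(1-p))^(m-k))"
    by (subst binomial_ring) simp
  also have "\<dots> = (\<Sum>k\<le>m. (bp m q k)^2 / bp m p k)"
  proof (rule sum.cong[OF refl])
    fix k assume k: "k \<in> {..m}"
    have C: "real (m choose k) > 0" using k by simp
    have pk: "p^k > 0" "(1-p)^(m-k) > 0" using p by auto
    show "real (m choose k) * (q^2/p)^k * ((1-q)^2/(1-p))^(m-k) = (bp m q k)^2 / bp m p k"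
    proof -
      have e: "(x^2)^j = (x^j)^2" for x :: real and j
        by (simp add: power_mult[symmetric] mult.commute)
      show ?thesis unfolding bp_def using C pk
        by (simp add: power_divide power_mult_distrib e) (simp add: field_simps power2_eq_square)
    qed
  qed
  finally show ?thesis by simp
qed

lemma ub_chi:
  assumes p: "0 < p" "p < 1" and q: "q \<in> {0..1}"
  shows "(\<Sum>k\<le>m. \<bar>bp m p k - bp m q k\<bar>)^2 \<le> (1 + (q-p)^2/(p*(1-p)))^m - 1"
proof -
  have P: "\<And>k. k \<in> {..m} \<Longrightarrow> 0 < bp m p k" using p by (auto simp: bp_def)
  have "(\<Sum>k\<le>m. \<bar>bp m p k - bp m q k\<bar>)^2 \<le> (\<Sum>k\<le>m. (bp m p k - bp m q k)^2 / bp m p k)"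
    by (rule cs) (use P bp_sum in auto)
  also have "\<dots> = (\<Sum>k\<le>m. (bp m q k)^2 / bp m p k - 2 * bp m q k + bp m p k)"
  proof (rule sum.cong[OF refl])
    fix k assume "k \<in> {..m}"
    then have "bp m p k > 0" by (rule P)
    then show "(bp m p k - bp m q k)^2 / bp m p k = (bp m q k)^2 / bp m p k - 2 * bp m q k + bp m p k"
      by (simp add: field_simps power2_eq_square)
  qed
  also have "\<dots> = (\<Sum>k\<le>m. (bp m q k)^2 / bp m p k) - 1"
    by (simp add: sum.distrib sum_subtractf sum_distrib_left[symmetric] bp_sum)
  finally have X: "(\<Sum>k\<le>m. \<bar>bp m p k - bp m q k\<bar>)^2 \<le> (\<Sum>k\<le>m. (bp m q k)^2 / bp m p k) - 1" .
  have eq: "q^2/p + (1-q)^2/(1-p) = 1 + (q-p)^2/(p*(1-p))"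
    using p by (simp add: field_simps power2_eq_square)
  show ?thesis using X unfolding chi_sum[OF p] eq .
qed

lemma exp_part:
  assumes "0 \<le> a" "real m * a \<le> 1/2"
  shows "(1 + a)^m - 1 \<le> 2 * real m * a"
proof -
  have "(1 + a)^m \<le> (exp a)^m" using assms by (intro power_mono) auto
  also have "\<dots> = exp (real m * a)" by (simp add: exp_of_nat_mult)
  also have "\<dots> \<le> 1 + 2 * (real m * a)"
    using exp_bound_lemma[of "real m * a"] assms by simp
  finally show ?thesis by simp
qed

lemma ub_sqrt:
  assumes p: "0 < p" "p < 1" and q: "q \<in> {0..1}"
  shows "(\<Sum>k\<le>m. \<bar>bp m p k - bp m q k\<bar>) \<le> 3 * (sqrt (real m) * \<bar>p - q\<bar> / sqrt (p * (1 - p)))"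
proof -
  define L where "L = (\<Sum>k\<le>m. \<bar>bp m p k - bp m q k\<bar>)"
  define x where "x = sqrt (real m) * \<bar>p - q\<bar> / sqrt (p * (1 - p))"
  define a where "a = (q-p)^2/(p*(1-p))"
  have sp: "p * (1-p) > 0" using p by simp
  have x2: "x^2 = real m * a"
  proof -
    have "x^2 = real m * (p-q)^2 / (p*(1-p))" unfolding x_def using sp
      by (simp add: power_divide power_mult_distrib)
    also have "(p-q)^2 = (q-p)^2" by (rule power2_commute)
    finally show ?thesis unfolding a_def by simp
  qed
  have a0: "a \<ge> 0" unfolding a_def using sp by simp
  have L0: "L \<ge> 0" unfolding L_def by (intro sum_nonneg) auto
  have x0: "x \<ge> 0" unfolding x_def using sp by simp
  have L2: "L \<le> 2" unfolding L_def using ub_two[of p q m] p q by simp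
  have "L^2 \<le> (3*x)^2"
  proof (cases "x^2 \<le> 1/2")
    case True
    have "L^2 \<le> (1 + a)^m - 1" unfolding L_def a_def by (rule ub_chi[OF p q])
    also have "\<dots> \<le> 2 * real m * a" using True x2 a0 by (intro exp_part) auto
    also have "\<dots> \<le> (3*x)^2" using x2 a0 by (simp add: power_mult_distrib)
    finally show ?thesis .
  next
    case False
    have "L^2 \<le> 2^2" using L0 L2 by (intro power_mono) auto
    also have "\<dots> \<le> (3*x)^2" using False by (simp add: power_mult_distrib)
    finally show ?thesis .
  qed
  then have "L \<le> 3 * x" by (rule power2_le_imp_le) (use x0 in auto)
  then show ?thesis unfolding L_def x_def .
qed



lemma cheb:
  assumes s: "0 \<le> s" "s \<le> 1" and t: "t > 0"
  shows "(\<Sum>j\<in>{j\<in>{..n}. \<bar>real j - real n * s\<bar> < t}. bp n s j) \<ge> 1 - real n * s * (1 - s) / t^2"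
proof -
  define A where "A = {j\<in>{..n}. \<bar>real j - real n * s\<bar> < t}"
  define B where "B = {..n} - A"
  have nn: "0 \<le> bp n s j" for j using s bp_nonneg by auto
  have "(\<Sum>j\<in>B. bp n s j) \<le> (\<Sum>j\<in>B. bp n s j * (real j - real n * s)^2 / t^2)"
  proof (rule sum_mono)
    fix j assume "j \<in> B"
    then have "t \<le> \<bar>real j - real n * s\<bar>" unfolding B_def A_def by auto
    then have "t^2 \<le> (real j - real n * s)^2"
      using t by (metis abs_of_pos order_less_le power2_abs power_mono)
    then have "1 \<le> (real j - real n * s)^2 / t^2" using t by simp
    then show "bp n s j \<le> bp n s j * (real j - real n * s)^2 / t^2"
      using nn[of j] mult_left_mono[of 1 "(real j - real n * s)^2 / t^2" "bp n s j"] by simp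
  qed
  also have "\<dots> \<le> (\<Sum>j\<le>n. bp n s j * (real j - real n * s)^2 / t^2)"
    by (rule sum_mono2) (auto simp: B_def nn)
  also have "\<dots> = real n * s * (1 - s) / t^2"
    by (simp add: sum_divide_distrib[symmetric] var_sum)
  finally have X: "(\<Sum>j\<in>B. bp n s j) \<le> real n * s * (1 - s) / t^2" .
  have "(\<Sum>j\<in>A. bp n s j) + (\<Sum>j\<in>B. bp n s j) = (\<Sum>j\<le>n. bp n s j)"
    unfolding B_def by (subst sum.union_disjoint[symmetric]) (auto simp: A_def intro: sum.cong)
  also have "\<dots> = 1" by (rule bp_sum)
  finally show ?thesis using X unfolding A_def by linarith
qed

lemma lb:
  assumes p: "p \<in> {0..1}" and q: "q \<in> {0..1}"
  shows "(\<Sum>k\<le>Suc n. \<bar>bp (Suc n) p k - bp (Suc n) q k\<bar>) \<ge>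
    min (real (Suc n) * \<bar>p - q\<bar> / (2 * max 16 (8 * sqrt (real (Suc n) * (p * (1 - p)))))) (1/8)"
proof -
  define M where "M = real (Suc n)"
  have M1: "M \<ge> 1" and Mn: "real n = M - 1" unfolding M_def by auto
  define W where "W = max 16 (8 * sqrt (M * (p * (1 - p))))"
  define c where "c = M * p"
  define w where "w k = max (-1) (min 1 ((real k - c) / W))" for k
  define H where "H s = Ex (Suc n) s w" for s
  define L where "L = (\<Sum>k\<le>Suc n. \<bar>bp (Suc n) p k - bp (Suc n) q k\<bar>)"
  have W16: "W \<ge> 16" unfolding W_def by simp
  have sp0: "p * (1 - p) \<ge> 0" using p by auto
  have WW: "W^2 \<ge> 64 * (M * (p * (1 - p)))"
  proof -
    have "8 * sqrt (M * (p * (1 - p))) \<le> W" unfolding W_def by simp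
    then have "(8 * sqrt (M * (p * (1 - p))))^2 \<le> W^2" by (intro power_mono) (use M1 sp0 in auto)
    then show ?thesis using M1 sp0 by (simp add: power_mult_distrib)
  qed
  have w_bd: "\<bar>w k\<bar> \<le> 1" for k unfolding w_def by auto
  have w_mono: "w j \<le> w (Suc j)" for j
  proof -
    have "(real j - c) / W \<le> (real (Suc j) - c) / W" using W16 by (intro divide_right_mono) auto
    then show ?thesis unfolding w_def by (intro max.mono min.mono) auto
  qed
  have w_step: "w (Suc j) - w j = 1 / W" if "c - W \<le> real j" "real j + 1 \<le> c + W" for j
  proof -
    have a: "-1 \<le> (real j - c) / W" "(real j - c) / W \<le> 1"
      "-1 \<le> (real (Suc j) - c) / W" "(real (Suc j) - c) / W \<le> 1"
      using that W16 by (auto simp: field_simps)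
    then have "w j = (real j - c) / W" "w (Suc j) = (real (Suc j) - c) / W"
      unfolding w_def by auto
    then show ?thesis by (simp add: diff_divide_distrib[symmetric])
  qed
  have D_nonneg: "Dr n s w \<ge> 0" if "0 \<le> s" "s \<le> 1" for s
    unfolding Dr_def using that w_mono bp_nonneg
    by (intro mult_nonneg_nonneg sum_nonneg) auto
  have D_big: "Dr n s w \<ge> M / (2 * W)" if s: "0 \<le> s" "s \<le> 1" and sc: "M * \<bar>s - p\<bar> \<le> W / 4" for s
  proof -
    define A where "A = {j\<in>{..n}. \<bar>real j - real n * s\<bar> < W / 4}"
    have ch: "(\<Sum>j\<in>A. bp n s j) \<ge> 1 - real n * s * (1 - s) / (W/4)^2"
      unfolding A_def by (rule cheb) (use s W16 in auto)
    have V1: "real n * s * (1 - s) \<le> M * (s * (1 - s))"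
    proof -
      have h: "0 \<le> s * (1 - s)" using s by simp
      have "real n * (s * (1 - s)) \<le> M * (s * (1 - s))" using Mn h by (intro mult_right_mono) auto
      then show ?thesis by (simp add: mult.assoc)
    qed
    have V2: "s * (1 - s) \<le> p * (1 - p) + \<bar>s - p\<bar>"
    proof -
      have "s * (1 - s) - p * (1 - p) = (s - p) * (1 - s - p)" by (simp add: algebra_simps)
      also have "\<dots> \<le> \<bar>s - p\<bar>"
      proof -
        have "\<bar>1 - s - p\<bar> \<le> 1" using s p by auto
        then have "\<bar>(s - p) * (1 - s - p)\<bar> \<le> \<bar>s - p\<bar>" by (simp add: abs_mult mult_left_le)
        then show ?thesis by linarith
      qed
      finally show ?thesis by linarith
    qed
    have V: "real n * s * (1 - s) \<le> M * (p * (1 - p)) + W / 4"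
    proof -
      have "M * (s * (1 - s)) \<le> M * (p * (1 - p) + \<bar>s - p\<bar>)" using V2 M1 by (intro mult_left_mono) auto
      then show ?thesis using V1 sc by (simp add: algebra_simps)
    qed
    have "real n * s * (1 - s) / (W/4)^2 \<le> (M * (p * (1 - p)) + W / 4) / (W/4)^2"
      using V W16 by (intro divide_right_mono) auto
    also have "\<dots> = 16 * (M * (p * (1 - p))) / W^2 + 4 / W"
      using W16 by (simp add: field_simps power2_eq_square)
    also have "16 * (M * (p * (1 - p))) / W^2 \<le> 1/4"
      using WW W16 by (simp add: field_simps)
    also have "4 / W \<le> 1/4" using W16 by (simp add: field_simps)
    finally have "real n * s * (1 - s) / (W/4)^2 \<le> 1/2" by simp
    with ch have A2: "(\<Sum>j\<in>A. bp n s j) \<ge> 1/2" by linarith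
    have step: "w (Suc j) - w j = 1 / W" if "j \<in> A" for j
    proof (rule w_step)
      have j: "\<bar>real j - (M - 1) * s\<bar> < W / 4" using that unfolding A_def Mn by auto
      have "M * s - c = M * (s - p)" unfolding c_def by (simp add: algebra_simps)
      then have "\<bar>M * s - c\<bar> = M * \<bar>s - p\<bar>" using M1 by (simp add: abs_mult)
      then have "\<bar>M * s - c\<bar> \<le> W / 4" using sc by simp
      then have e1: "M * s - c \<le> W / 4 \<and> -(M * s - c) \<le> W / 4" by (simp only: abs_le_iff)
      have e2: "real j - (M - 1) * s < W / 4 \<and> -(real j - (M - 1) * s) < W / 4" using j by (simp only: abs_less_iff)
      have e3: "(M - 1) * s = M * s - s" by (simp add: algebra_simps)
      show "c - W \<le> real j" "real j + 1 \<le> c + W" using e1 e2 e3 s W16 by linarith+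
    qed
    have "(\<Sum>j\<in>A. bp n s j) / W = (\<Sum>j\<in>A. bp n s j * (w (Suc j) - w j))"
      by (simp add: step sum_divide_distrib)
    also have "\<dots> \<le> (\<Sum>j\<le>n. bp n s j * (w (Suc j) - w j))"
      by (rule sum_mono2) (use s w_mono bp_nonneg in \<open>auto simp: A_def\<close>)
    finally have F: "(\<Sum>j\<in>A. bp n s j) / W \<le> (\<Sum>j\<le>n. bp n s j * (w (Suc j) - w j))" .
    have "(1/2) / W \<le> (\<Sum>j\<in>A. bp n s j) / W" using A2 W16 by (intro divide_right_mono) auto
    then have "1 / (2 * W) \<le> (\<Sum>j\<le>n. bp n s j * (w (Suc j) - w j))" using F by simp
    then have "M * (1 / (2 * W)) \<le> M * (\<Sum>j\<le>n. bp n s j * (w (Suc j) - w j))"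
      using M1 by (intro mult_left_mono) auto
    then show ?thesis unfolding Dr_def M_def[symmetric] by simp
  qed
  have deriv: "\<And>x. (H has_real_derivative Dr n x w) (at x)"
    unfolding H_def by (rule deriv_Ex)
  have H_mono: "H a \<le> H b" if "0 \<le> a" "a \<le> b" "b \<le> 1" for a b
  proof -
    obtain \<xi> where xi: "min a b \<le> \<xi>" "\<xi> \<le> max a b" "H b - H a = (b - a) * Dr n \<xi> w"
      using mvt_gen[OF deriv] by blast
    have "Dr n \<xi> w \<ge> 0" using xi that by (intro D_nonneg) auto
    then have "(b - a) * Dr n \<xi> w \<ge> 0" using that by (intro mult_nonneg_nonneg) auto
    then show ?thesis using xi(3) by linarith
  qed
  have H_lower: "\<bar>H q' - H p\<bar> \<ge> M * \<bar>q' - p\<bar> / (2 * W)" if q': "0 \<le> q'" "q' \<le> 1" "M * \<bar>q' - p\<bar> \<le> W / 4" for q'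
  proof -
    obtain \<xi> where xi: "min p q' \<le> \<xi>" "\<xi> \<le> max p q'" "H q' - H p = (q' - p) * Dr n \<xi> w"
      using mvt_gen[OF deriv] by blast
    have "\<bar>\<xi> - p\<bar> \<le> \<bar>q' - p\<bar>" using xi by auto
    then have "M * \<bar>\<xi> - p\<bar> \<le> M * \<bar>q' - p\<bar>" using M1 by (intro mult_left_mono) auto
    then have "M * \<bar>\<xi> - p\<bar> \<le> W / 4" using q' by linarith
    then have D: "Dr n \<xi> w \<ge> M / (2 * W)" using xi p q' by (intro D_big) auto
    have "M / (2 * W) \<ge> 0" using M1 W16 by simp
    then have D0: "Dr n \<xi> w \<ge> 0" using D by linarith
    have "\<bar>H q' - H p\<bar> = \<bar>q' - p\<bar> * Dr n \<xi> w" using xi(3) D0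
      by (simp add: abs_mult)
    also have "\<dots> \<ge> \<bar>q' - p\<bar> * (M / (2 * W))" using D by (intro mult_left_mono) auto
    finally show ?thesis by (simp add: mult.commute)
  qed
  have L_ge: "L \<ge> \<bar>H q - H p\<bar>"
  proof -
    have "H q - H p = (\<Sum>k\<le>Suc n. (bp (Suc n) q k - bp (Suc n) p k) * w k)"
      unfolding H_def Ex_def left_diff_distrib sum_subtractf by (rule refl)
    also have "\<bar>\<dots>\<bar> \<le> (\<Sum>k\<le>Suc n. \<bar>(bp (Suc n) q k - bp (Suc n) p k) * w k\<bar>)" by (rule sum_abs)
    also have "\<dots> \<le> L" unfolding L_def
    proof (rule sum_mono)
      fix k
      have "\<bar>(bp (Suc n) q k - bp (Suc n) p k) * w k\<bar> \<le> \<bar>bp (Suc n) q k - bp (Suc n) p k\<bar> * 1"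
        unfolding abs_mult by (intro mult_left_mono w_bd) auto
      then show "\<bar>(bp (Suc n) q k - bp (Suc n) p k) * w k\<bar> \<le> \<bar>bp (Suc n) p k - bp (Suc n) q k\<bar>"
        by (simp add: abs_minus_commute)
    qed
    finally show ?thesis .
  qed
  have main: "L \<ge> min (M * \<bar>p - q\<bar> / (2 * W)) (1/8)"
  proof (cases "M * \<bar>q - p\<bar> \<le> W / 4")
    case True
    have "L \<ge> M * \<bar>q - p\<bar> / (2 * W)" using L_ge H_lower[of q] q True by auto
    then show ?thesis by (simp add: abs_minus_commute)
  next
    case False
    define X where "X = M * \<bar>q - p\<bar>"
    have pos: "X > W / 4" using False unfolding X_def by simp
    have Xp: "X > 0" using pos W16 by linarith
    define t where "t = W / (4 * X)"
    have t0: "0 < t" unfolding t_def using Xp W16 by simp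
    have t1: "t < 1" unfolding t_def using pos Xp by (simp add: field_simps)
    define q' where "q' = p + t * (q - p)"
    have q'c: "q' = (1 - t) * p + t * q" unfolding q'_def by (simp add: algebra_simps)
    have q'0: "0 \<le> q'" unfolding q'c using t0 t1 p q by (intro add_nonneg_nonneg mult_nonneg_nonneg) auto
    have q'1: "q' \<le> 1" unfolding q'c by (rule convex_bound_le) (use t0 t1 p q in auto)
    have e1: "q' - p = t * (q - p)" unfolding q'_def by simp
    have e2: "q - q' = (1 - t) * (q - p)" unfolding q'_def by (simp add: algebra_simps)
    have dq: "M * \<bar>q' - p\<bar> = W / 4"
    proof -
      have "\<bar>q' - p\<bar> = t * \<bar>q - p\<bar>" using e1 t0 by (simp add: abs_mult)
      then have "M * \<bar>q' - p\<bar> = t * X" unfolding X_def by simp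
      also have "\<dots> = W / 4" unfolding t_def using Xp by simp
      finally show ?thesis .
    qed
    have dq': "M * \<bar>q' - p\<bar> \<le> W / 4" using dq by simp
    have "\<bar>H q' - H p\<bar> \<ge> M * \<bar>q' - p\<bar> / (2 * W)" by (rule H_lower[OF q'0 q'1 dq'])
    also have "M * \<bar>q' - p\<bar> / (2 * W) = 1/8" unfolding dq using W16 by simp
    finally have h8: "\<bar>H q' - H p\<bar> \<ge> 1/8" .
    have "\<bar>H q - H p\<bar> \<ge> \<bar>H q' - H p\<bar>"
    proof (cases "p \<le> q")
      case True
      have h1: "t * (q - p) \<ge> 0" using \<open>p \<le> q\<close> t0 by simp
      have h2: "(1 - t) * (q - p) \<ge> 0" using \<open>p \<le> q\<close> t1 by simp
      have "p \<le> q'" using h1 e1 by linarith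
      moreover have "q' \<le> q" using h2 e2 by linarith
      ultimately have "p \<le> q'" "q' \<le> q" by auto
      then have "H p \<le> H q'" "H q' \<le> H q" using H_mono p q q'0 q'1 by auto
      then show ?thesis by simp
    next
      case False
      have h1: "t * (q - p) \<le> 0" using \<open>\<not> p \<le> q\<close> t0 by (intro mult_nonneg_nonpos) auto
      have h2: "(1 - t) * (q - p) \<le> 0" using \<open>\<not> p \<le> q\<close> t1 by (intro mult_nonneg_nonpos) auto
      have "q \<le> q'" using h2 e2 by linarith
      moreover have "q' \<le> p" using h1 e1 by linarith
      ultimately have "q \<le> q'" "q' \<le> p" by auto
      then have "H q \<le> H q'" "H q' \<le> H p" using H_mono p q q'0 q'1 by auto
      then show ?thesis by simp
    qed
    then have "L \<ge> 1/8" using h8 L_ge by linarith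
    then show ?thesis by (simp add: min_le_iff_disj)
  qed
  then show ?thesis unfolding L_def M_def W_def by simp
qed



lemma bin_rate_eq: "bin_rate m p q = ereal (if p = q then 0 else if p*(1-p) = 0 then min (real m * \<bar>p-q\<bar>) 1
   else min (real m * \<bar>p-q\<bar>) (min (sqrt (real m) * \<bar>p-q\<bar> / sqrt (p*(1-p))) 1))"
  unfolding bin_rate_def mid_term_def by (auto simp: min_def)

lemma real_main:
  assumes p: "p \<in> {0..1}" and q: "q \<in> {0..1}" and m: "m = Suc n"
  defines "r \<equiv> (if p = q then 0 else if p*(1-p) = 0 then min (real m * \<bar>p-q\<bar>) 1
   else min (real m * \<bar>p-q\<bar>) (min (sqrt (real m) * \<bar>p-q\<bar> / sqrt (p*(1-p))) 1))"
  shows "(1/32) * r \<le> (\<Sum>k\<le>m. \<bar>bp m p k - bp m q k\<bar>) \<and> (\<Sum>k\<le>m. \<bar>bp m p k - bp m q k\<bar>) \<le> 3 * r"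
proof (cases "p = q")
  case True
  then show ?thesis unfolding r_def by simp
next
  case pq: False
  define L where "L = (\<Sum>k\<le>m. \<bar>bp m p k - bp m q k\<bar>)"
  define M where "M = real m"
  define d where "d = \<bar>p - q\<bar>"
  define s2 where "s2 = p * (1 - p)"
  define x where "x = sqrt M * d / sqrt s2"
  have M1: "M \<ge> 1" unfolding M_def m by simp
  have d0: "d > 0" unfolding d_def using pq by simp
  have s20: "s2 \<ge> 0" unfolding s2_def using p by auto
  have r_le: "r \<le> M * d" "r \<le> 1" unfolding r_def M_def d_def by auto
  have r_x: "s2 \<noteq> 0 \<Longrightarrow> r \<le> x" unfolding r_def x_def M_def d_def s2_def using pq by auto
  have r_ge: "r \<ge> min (M * d) (min x 1)" if "s2 \<noteq> 0" unfolding r_def x_def M_def d_def s2_def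
    using pq that s2_def by auto
  have r_ge0: "r \<ge> min (M * d) 1" if "s2 = 0" unfolding r_def M_def d_def using pq that s2_def by auto
  define W where "W = max 16 (8 * sqrt (M * s2))"
  have lbL: "L \<ge> min (M * d / (2 * W)) (1/8)"
    using lb[OF p q, of n] unfolding L_def W_def M_def d_def s2_def m .
  have W16: "W \<ge> 16" unfolding W_def by simp
  have key: "r * W \<le> 16 * (M * d)"
  proof (cases "8 * sqrt (M * s2) \<le> 16")
    case True
    then have "W = 16" unfolding W_def by simp
    then show ?thesis using r_le by simp
  next
    case False
    then have WW: "W = 8 * sqrt (M * s2)" unfolding W_def by simp
    have "sqrt (M * s2) > 0" using False by linarith
    then have sp: "s2 > 0" using M1 s20 by (simp add: zero_less_mult_iff)
    have rx: "r \<le> x" using r_x sp by simp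
    have "r * W \<le> x * W" using rx W16 by (intro mult_right_mono) auto
    also have "x * W = 8 * (sqrt M * sqrt M) * d * (sqrt s2 / sqrt s2)"
      unfolding x_def WW using M1 s20 by (simp add: real_sqrt_mult field_simps)
    also have "\<dots> = 8 * M * d" using sp M1 by simp
    finally have "r * W \<le> 8 * (M * d)" by (simp add: mult.assoc)
    moreover have "M * d > 0" using M1 d0 by simp
    ultimately show ?thesis by linarith
  qed
  have lower: "(1/32) * r \<le> L"
  proof -
    have "(1/32) * r \<le> M * d / (2 * W)" using key W16 by (simp add: field_simps)
    moreover have "(1/32) * r \<le> 1/8" using r_le by simp
    ultimately show ?thesis using lbL by linarith
  qed
  have U1: "L \<le> 2" unfolding L_def using ub_two p q by blast
  have U2: "L \<le> 2 * M * d" unfolding L_def M_def d_def m using ub_lin[OF p q, of n] .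
  have Md: "M * d > 0" using M1 d0 by simp
  have U2': "L \<le> 2 * (M * d)" using U2 by (simp add: mult.assoc)
  have upper: "L \<le> 3 * r"
  proof (cases "s2 = 0")
    case True
    then show ?thesis using r_ge0[OF True] U1 U2' Md by (auto simp: min_def split: if_splits)
  next
    case False
    then have "0 < p" "p < 1" using p s2_def by auto
    then have U3: "L \<le> 3 * x" unfolding L_def x_def M_def d_def s2_def using ub_sqrt q by blast
    show ?thesis using r_ge[OF False] U1 U2' U3 Md by (auto simp: min_def split: if_splits)
  qed
  show ?thesis using lower upper unfolding L_def by simp
qed

theorem theorem5:
  shows "\<exists>c1 c2 :: real. 0 < c1 \<and> c1 \<le> c2 \<and>
    (\<forall>m :: nat. \<forall>p q :: real. 0 < m \<longrightarrow> p \<in> {0..1} \<longrightarrow> q \<in> {0..1} \<longrightarrow>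
       ereal c1 * bin_rate m p q \<le> ereal (l1_dist m (binomial_pmf m p) (binomial_pmf m q)) \<and>
       ereal (l1_dist m (binomial_pmf m p) (binomial_pmf m q)) \<le> ereal c2 * bin_rate m p q)"
proof -
  have *: "\<forall>m :: nat. \<forall>p q :: real. 0 < m \<longrightarrow> p \<in> {0..1} \<longrightarrow> q \<in> {0..1} \<longrightarrow>
       ereal (1/32) * bin_rate m p q \<le> ereal (l1_dist m (binomial_pmf m p) (binomial_pmf m q)) \<and>
       ereal (l1_dist m (binomial_pmf m p) (binomial_pmf m q)) \<le> ereal 3 * bin_rate m p q"
  proof (intro allI impI)
    fix m :: nat and p q :: real
    assume m: "0 < m" and p: "p \<in> {0..1}" and q: "q \<in> {0..1}"
    obtain n where n: "m = Suc n" using m gr0_implies_Suc by blast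
    note R = real_main[OF p q n]
    show "ereal (1/32) * bin_rate m p q \<le> ereal (l1_dist m (binomial_pmf m p) (binomial_pmf m q)) \<and>
       ereal (l1_dist m (binomial_pmf m p) (binomial_pmf m q)) \<le> ereal 3 * bin_rate m p q"
      unfolding bin_rate_eq l1_eq[OF p q] using R by simp
  qed
  show ?thesis
    by (rule exI[of _ "1/32"], rule exI[of _ 3]) (use * in simp)
qed

end
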